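(* Let $f:\mathbb{R}^d\to\mathbb{R}$ be differentiable and $M$-smooth ($M\ge 0$ a scalar), and let $\bar z$ be a stationary point of $f$ ($\nabla f(\bar z)=0$). Let $s$ be standardized on $\mathbb{R}^d$ with $\mathbb{E}[\mathsf{u}_i^4]=\kappa<\infty$, and for $w=(m,C)$ let $\mathsf{g}=\nabla_w f(T_w(\mathsf{u}))$ with $\mathsf{u}\sim s$. Then \[ \mathbb{E}\|\mathsf{g}\|_2^2\le M^2\Big((d+1)\|m-\bar z\|_2^2+(d+\kappa)\|C\|_F^2\Big). \] Moreover, the bound is unimprovable: for every $M\ge0$ and every $\bar z\in\mathbb{R}^d$, the function $f(z)=\frac{M}{2}\|z-\bar z\|_2^2$ satisfies the hypotheses and attains equality for every $w=(m,C)$.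
   Context: $f$ is $M$-smooth if $\|\nabla f(y)-\nabla f(z)\|_2\le M\|y-z\|_2$ for all $y,z\in\mathbb{R}^d$. $T_w(u)=Cu+m$ for $w=(m,C)$, $m\in\mathbb{R}^d$, $C\in\mathbb{R}^{d\times d}$, with $w$ regarded as the vector of all $d+d^2$ entries; $\nabla_w$ is the gradient with respect to all these entries and $\|\cdot\|_2$ on it is the Euclidean norm over all entries. A distribution $s$ on $\mathbb{R}^d$ is standardized if for $\mathsf{u}\sim s$ the components are i.i.d. with $\mathbb{E}\mathsf{u}_1=\mathbb{E}\mathsf{u}_1^3=0$ and $\mathrm{Var}(\mathsf{u}_1)=1$. $\|\cdot\|_F$ is the Frobenius norm. *)

theory Defs
  imports "HOL-Analysis.Analysis" "HOL-Probability.Probability"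
begin

definition grad :: "('a::real_inner \<Rightarrow> real) \<Rightarrow> 'a \<Rightarrow> 'a" where
  "grad f x = (THE D. GDERIV f x :> D)"

definition smooth :: "real \<Rightarrow> ('a::real_inner \<Rightarrow> real) \<Rightarrow> bool" where
  "smooth M f \<longleftrightarrow> (\<forall>y z. norm (grad f y - grad f z) \<le> M * norm (y - z))"

text \<open>Affine map T_w(u) = C u + m, with w = (m, C). The parameter w lives in
  the product space real^'n \<times> real^'n^'n, whose norm is the Euclidean norm over
  all d + d^2 entries.\<close>
definition T :: "(real^'n) \<times> (real^'n^'n) \<Rightarrow> real^'n \<Rightarrow> real^'n" where
  "T w u = snd w *v u + fst w"

definition standardized_kappa :: "(real^'n) measure \<Rightarrow> real \<Rightarrow> bool" where
  "standardized_kappa s \<kappa> \<longleftrightarrow>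
     prob_space s \<and> sets s = sets borel \<and>
     prob_space.indep_vars s (\<lambda>_. borel) (\<lambda>i u. u $ i) UNIV \<and>
     (\<forall>i j. distr s borel (\<lambda>u. u $ i) = distr s borel (\<lambda>u. u $ j)) \<and>
     (\<forall>i. integrable s (\<lambda>u. (u $ i) ^ 4)) \<and>
     (\<forall>i. prob_space.expectation s (\<lambda>u. u $ i) = 0) \<and>
     (\<forall>i. prob_space.expectation s (\<lambda>u. (u $ i) ^ 3) = 0) \<and>
     (\<forall>i. prob_space.variance s (\<lambda>u. u $ i) = 1) \<and>
     (\<forall>i. prob_space.expectation s (\<lambda>u. (u $ i) ^ 4) = \<kappa>)"

end

theory Submission
  imports Defs
begin


lemma gderiv_unique:
  fixes f :: "'a::real_inner \<Rightarrow> real"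
  assumes "GDERIV f x :> D1" "GDERIV f x :> D2" shows "D1 = D2"
proof -
  have "(\<lambda>h. inner h D1) = (\<lambda>h. inner h D2)"
    using has_derivative_unique assms unfolding gderiv_def by blast
  then have "inner (D1 - D2) D1 = inner (D1 - D2) D2" by metis
  then have "inner (D1 - D2) (D1 - D2) = 0" by (simp add: inner_diff_right)
  then show ?thesis by simp
qed

lemma grad_eqI:
  fixes f :: "'a::real_inner \<Rightarrow> real"
  assumes "GDERIV f x :> D" shows "grad f x = D"
  unfolding grad_def using assms gderiv_unique by blast

lemma grad_exists:
  fixes f :: "'a::euclidean_space \<Rightarrow> real"
  assumes "f differentiable (at x)" shows "GDERIV f x :> grad f x"
proof -
  obtain D where D: "(f has_derivative D) (at x)" using assms unfolding differentiable_def by blast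
  have lin: "linear D" using D has_derivative_linear by blast
  define g where "g = (\<Sum>b\<in>Basis. D b *\<^sub>R b)"
  have "D h = inner h g" for h
  proof -
    have "D h = D (\<Sum>b\<in>Basis. (h \<bullet> b) *\<^sub>R b)" by (simp add: euclidean_representation)
    also have "\<dots> = (\<Sum>b\<in>Basis. (h \<bullet> b) * D b)"
      using lin by (simp add: linear_sum linear_scale)
    also have "\<dots> = inner h g" unfolding g_def by (simp add: inner_sum_right mult.commute)
    finally show ?thesis .
  qed
  then have "GDERIV f x :> g" unfolding gderiv_def using D
    by (metis (no_types, lifting) ext)
  then show ?thesis using grad_eqI by metis
qed

definition outer :: "real^'n \<Rightarrow> real^'n \<Rightarrow> real^'n^'n" where
  "outer g u = (\<chi> i j. g $ i * u $ j)"

lemma grad_comp: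
  fixes f :: "real^'n \<Rightarrow> real"
  assumes "f differentiable (at (T w u))"
  shows "grad (\<lambda>w. f (T w u)) w = (grad f (T w u), outer (grad f (T w u)) u)"
proof -
  let ?g = "grad f (T w u)"
  have lin: "linear (\<lambda>h::(real^'n)\<times>(real^'n^'n). snd h *v u + fst h)"
    by (rule linearI) (auto simp: matrix_vector_mult_add_rdistrib algebra_simps
       matrix_vector_mult_def vec_eq_iff sum_distrib_left sum.distrib)
  have "((\<lambda>h::(real^'n)\<times>(real^'n^'n). snd h *v u + fst h) has_derivative (\<lambda>h. snd h *v u + fst h)) (at w)"
    using lin by (simp add: linear_conv_bounded_linear bounded_linear_imp_has_derivative)
  moreover have "(f has_derivative (\<lambda>h. inner h ?g)) (at (T w u))"
    using grad_exists[OF assms] unfolding gderiv_def .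
  ultimately have "((\<lambda>w. f (T w u)) has_derivative (\<lambda>h. inner (snd h *v u + fst h) ?g)) (at w)"
    unfolding T_def by (rule has_derivative_compose)
  moreover have "inner (snd h *v u + fst h) ?g = inner h (?g, outer ?g u)" for h :: "(real^'n)\<times>(real^'n^'n)"
  proof (cases h)
    case (Pair m' A)
    have "inner (A *v u) ?g = (\<Sum>i\<in>UNIV. (\<Sum>j\<in>UNIV. A$i$j * u$j) * ?g$i)"
      by (simp add: inner_vec_def matrix_vector_mult_def mult.commute)
    also have "\<dots> = (\<Sum>i\<in>UNIV. (\<Sum>j\<in>UNIV. A$i$j * (?g$i * u$j)))"
      apply (rule sum.cong[OF refl])
      apply (subst sum_distrib_right)
      apply (rule sum.cong[OF refl])
      by (simp add: algebra_simps)
    also have "\<dots> = inner A (outer ?g u)"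
      by (simp add: inner_vec_def outer_def)
    finally show ?thesis using Pair by (simp add: inner_add_left)
  qed
  ultimately have "GDERIV (\<lambda>w. f (T w u)) w :> (?g, outer ?g u)" unfolding gderiv_def by simp
  then show ?thesis by (rule grad_eqI)
qed

lemma norm_outer: "(norm (outer g u))\<^sup>2 = (norm g)\<^sup>2 * (norm u)\<^sup>2"
proof -
  have "(norm (outer g u))\<^sup>2 = (\<Sum>i\<in>UNIV. (norm (outer g u $ i))\<^sup>2)"
    by (simp add: power2_norm_eq_inner inner_vec_def)
  also have "\<dots> = (\<Sum>i\<in>UNIV. (g $ i)\<^sup>2 * (norm u)\<^sup>2)"
  proof (rule sum.cong)
    fix i have "outer g u $ i = g $ i *\<^sub>R u" by (simp add: outer_def vec_eq_iff)
    then show "(norm (outer g u $ i))\<^sup>2 = (g $ i)\<^sup>2 * (norm u)\<^sup>2" by (simp add: power_mult_distrib)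
  qed simp
  also have "\<dots> = (norm g)\<^sup>2 * (norm u)\<^sup>2"
  proof -
    have "(norm g)\<^sup>2 = inner g g" by (rule power2_norm_eq_inner)
    also have "\<dots> = (\<Sum>i\<in>UNIV. (g $ i)\<^sup>2)" by (simp add: inner_vec_def power2_eq_square)
    finally have "(norm g)\<^sup>2 = (\<Sum>i\<in>UNIV. (g $ i)\<^sup>2)" .
    then show ?thesis by (simp add: sum_distrib_right)
  qed
  finally show ?thesis .
qed



definition mm :: "real \<Rightarrow> nat \<Rightarrow> real" where
  "mm \<kappa> n = (if n = 0 then 1 else if n = 2 then 1 else if n = 4 then \<kappa> else 0)"

context
  fixes s :: "(real^'n) measure" and \<kappa> :: real
  assumes std: "standardized_kappa s \<kappa>"
begin

lemma ps: "prob_space s" using std unfolding standardized_kappa_def by blast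

lemma sets_s: "sets s = sets borel" using std unfolding standardized_kappa_def by blast

lemma meas_cont: "continuous_on UNIV g \<Longrightarrow> (g :: real^'n \<Rightarrow> real) \<in> borel_measurable s"
  using measurable_cong_sets[OF sets_s refl] borel_measurable_continuous_onI by blast

lemma meas_nth: "(\<lambda>u. u $ i) \<in> borel_measurable s"
  by (rule meas_cont) (intro continuous_intros)

lemma pow_bound: "k \<le> 4 \<Longrightarrow> norm ((x::real) ^ k) \<le> norm (1 + x ^ 4)"
proof -
  assume k: "k \<le> 4"
  have x4: "0 \<le> x ^ 4" by (simp add: zero_le_even_power)
  have n1: "norm (x^k) = \<bar>x\<bar>^k" by (simp add: power_abs)
  have n2: "norm (1 + x^4) = 1 + x^4" using x4 by simp
  show ?thesis
  proof (cases "\<bar>x\<bar> \<le> 1")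
    case True
    then have "\<bar>x\<bar> ^ k \<le> 1" by (simp add: power_le_one)
    then show ?thesis using x4 n1 n2 by linarith
  next
    case False
    then have "\<bar>x\<bar> ^ k \<le> \<bar>x\<bar> ^ 4" using k by (intro power_increasing) auto
    then show ?thesis using x4 n1 n2 by simp
  qed
qed

lemma int_pow: "k \<le> 4 \<Longrightarrow> integrable s (\<lambda>u. (u $ i) ^ k)"
proof -
  assume k: "k \<le> 4"
  interpret prob_space s by (rule ps)
  have i4: "integrable s (\<lambda>u. 1 + (u $ i) ^ 4)"
    using std unfolding standardized_kappa_def by auto
  have ms: "(\<lambda>u. (u $ i) ^ k) \<in> borel_measurable s"
    by (rule meas_cont) (intro continuous_intros)
  show ?thesis
    by (rule Bochner_Integration.integrable_bound[OF i4 ms]) (use pow_bound[OF k] in auto)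
qed

lemma mom: "k \<le> 4 \<Longrightarrow> integral\<^sup>L s (\<lambda>u. (u $ i) ^ k) = mm \<kappa> k"
proof -
  assume k: "k \<le> 4"
  interpret prob_space s by (rule ps)
  have e1: "expectation (\<lambda>u. u $ i) = 0" and e3: "expectation (\<lambda>u. (u $ i)^3) = 0"
    and e4: "expectation (\<lambda>u. (u $ i)^4) = \<kappa>" and v: "variance (\<lambda>u. u $ i) = 1"
    using std unfolding standardized_kappa_def by auto
  from k have "k = 0 \<or> k = 1 \<or> k = 2 \<or> k = 3 \<or> k = 4" by auto
  then show ?thesis
    using e1 e3 e4 v by (auto simp: mm_def prob_space)
qed

lemma indep: "prob_space.indep_vars s (\<lambda>_. borel) (\<lambda>i u. u $ i) UNIV"
  using std unfolding standardized_kappa_def by blast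

lemma mono_prod:
  assumes "\<And>i. p i \<le> 4"
  shows "integrable s (\<lambda>u. \<Prod>i\<in>UNIV. (u $ i) ^ p i)"
    and "integral\<^sup>L s (\<lambda>u. \<Prod>i\<in>UNIV. (u $ i) ^ p i) = (\<Prod>i\<in>UNIV. mm \<kappa> (p i))"
proof -
  interpret prob_space s by (rule ps)
  have iv: "indep_vars (\<lambda>_. borel) (\<lambda>i u. (u $ i) ^ p i) UNIV"
    by (rule indep_vars_compose2[OF indep]) auto
  show "integrable s (\<lambda>u. \<Prod>i\<in>UNIV. (u $ i) ^ p i)"
    by (rule indep_vars_integrable) (auto intro: iv int_pow assms)
  have "integral\<^sup>L s (\<lambda>u. \<Prod>i\<in>UNIV. (u $ i) ^ p i) = (\<Prod>i\<in>UNIV. integral\<^sup>L s (\<lambda>u. (u $ i) ^ p i))"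
    by (rule indep_vars_lebesgue_integral) (auto intro: iv int_pow assms)
  also have "\<dots> = (\<Prod>i\<in>UNIV. mm \<kappa> (p i))" using mom assms by simp
  finally show "integral\<^sup>L s (\<lambda>u. \<Prod>i\<in>UNIV. (u $ i) ^ p i) = (\<Prod>i\<in>UNIV. mm \<kappa> (p i))" .
qed

lemma prod_delta_pow: "(\<Prod>i\<in>UNIV. (u $ i) ^ (if i = j then x else 0)) = (u $ j :: real) ^ x"
proof -
  have "(\<Prod>i\<in>UNIV. (u $ i) ^ (if i = j then x else 0)) = (\<Prod>i\<in>UNIV. if i = j then (u $ i) ^ x else 1)"
    by (rule prod.cong) auto
  also have "\<dots> = (u $ j) ^ x" by (simp add: prod.delta)
  finally show ?thesis .
qed

lemma mono3_eq: fixes u :: "real^'n" shows "(u $ j) ^ x * (u $ l) ^ y * (u $ k) ^ z =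
  (\<Prod>i\<in>UNIV. (u $ i) ^ ((if i = j then x else 0) + (if i = l then y else 0) + (if i = k then z else 0)))"
  by (simp only: power_add prod.distrib prod_delta_pow)

lemma mono3:
  assumes "x + y + z \<le> 4"
  shows "integrable s (\<lambda>u. (u $ j) ^ x * (u $ l) ^ y * (u $ k) ^ z)"
    and "integral\<^sup>L s (\<lambda>u. (u $ j) ^ x * (u $ l) ^ y * (u $ k) ^ z) =
      (\<Prod>i\<in>UNIV. mm \<kappa> ((if i = j then x else 0) + (if i = l then y else 0) + (if i = k then z else 0)))"
proof -
  have p: "\<And>i. (if i = j then x else 0) + (if i = l then y else 0) + (if i = k then z else 0) \<le> 4"
    using assms by auto
  show "integrable s (\<lambda>u. (u $ j) ^ x * (u $ l) ^ y * (u $ k) ^ z)"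
    unfolding mono3_eq by (rule mono_prod(1)[OF p])
  show "integral\<^sup>L s (\<lambda>u. (u $ j) ^ x * (u $ l) ^ y * (u $ k) ^ z) =
      (\<Prod>i\<in>UNIV. mm \<kappa> ((if i = j then x else 0) + (if i = l then y else 0) + (if i = k then z else 0)))"
    unfolding mono3_eq by (rule mono_prod(2)[OF p])
qed

lemma prod_mm_single: fixes j :: 'n shows "(\<Prod>i\<in>UNIV. mm \<kappa> (if i = j then a else 0)) = mm \<kappa> a"
proof -
  have "(\<Prod>i\<in>UNIV. mm \<kappa> (if i = j then a else 0)) = (\<Prod>i\<in>UNIV. if i = j then mm \<kappa> a else 1)"
    by (rule prod.cong) (auto simp: mm_def)
  also have "\<dots> = mm \<kappa> a" by (simp add: prod.delta)
  finally show ?thesis .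
qed

lemma prod_mm_two: fixes j k :: 'n assumes "j \<noteq> k"
  shows "(\<Prod>i\<in>UNIV. mm \<kappa> ((if i = j then a else 0) + (if i = k then b else 0))) = mm \<kappa> a * mm \<kappa> b"
proof -
  have "(\<Prod>i\<in>UNIV. mm \<kappa> ((if i = j then a else 0) + (if i = k then b else 0)))
     = mm \<kappa> a * (\<Prod>i\<in>UNIV - {j}. mm \<kappa> ((if i = j then a else 0) + (if i = k then b else 0)))"
    using assms by (subst prod.remove[of UNIV j]) auto
  also have "(\<Prod>i\<in>UNIV - {j}. mm \<kappa> ((if i = j then a else 0) + (if i = k then b else 0)))
     = (\<Prod>i\<in>UNIV - {j}. if i = k then mm \<kappa> b else 1)"
    by (rule prod.cong) (auto simp: mm_def)
  also have "\<dots> = mm \<kappa> b" using assms by (simp add: prod.delta)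
  finally show ?thesis .
qed

lemma prod_mm_zero: fixes P :: "'n \<Rightarrow> nat" assumes "(P j = 1 \<or> P j = 3)"
  shows "(\<Prod>i\<in>UNIV. mm \<kappa> (P i)) = 0"
proof (rule prod_zero)
  show "\<exists>a\<in>UNIV. mm \<kappa> (P a) = 0" using assms by (intro bexI[of _ j]) (auto simp: mm_def)
qed simp

lemma Ea: "integrable s (\<lambda>u. u $ j * u $ l * (u $ k)^2)"
  "integral\<^sup>L s (\<lambda>u. u $ j * u $ l * (u $ k)^2) = (if j = l then (if j = k then \<kappa> else 1) else 0)"
proof -
  have e: "(\<lambda>u::real^'n. u $ j * u $ l * (u $ k)^2) = (\<lambda>u. (u $ j)^1 * (u $ l)^1 * (u $ k)^2)" by simp
  show "integrable s (\<lambda>u. u $ j * u $ l * (u $ k)^2)" unfolding e by (rule mono3(1)) simp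
  have I: "integral\<^sup>L s (\<lambda>u. u $ j * u $ l * (u $ k)^2) = (\<Prod>i\<in>UNIV. mm \<kappa> ((if i = j then 1 else 0) + (if i = l then 1 else 0) + (if i = k then 2 else 0)))"
    unfolding e by (rule mono3(2)) simp
  show "integral\<^sup>L s (\<lambda>u. u $ j * u $ l * (u $ k)^2) = (if j = l then (if j = k then \<kappa> else 1) else 0)"
  proof (cases "j = l")
    case True
    show ?thesis
    proof (cases "j = k")
      case True2: True
      have "(\<Prod>i\<in>UNIV. mm \<kappa> ((if i = j then 1 else 0) + (if i = l then 1 else 0) + (if i = k then 2 else 0)))
        = (\<Prod>i\<in>UNIV. mm \<kappa> (if i = j then 4 else 0))"
        using True True2 by (intro prod.cong) (auto simp: eval_nat_numeral)
      then show ?thesis using I True True2 prod_mm_single by (simp add: mm_def eval_nat_numeral)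
    next
      case False
      have "(\<Prod>i\<in>UNIV. mm \<kappa> ((if i = j then 1 else 0) + (if i = l then 1 else 0) + (if i = k then 2 else 0)))
        = (\<Prod>i\<in>UNIV. mm \<kappa> ((if i = j then 2 else 0) + (if i = k then 2 else 0)))"
        using True by (intro prod.cong) (auto simp: eval_nat_numeral)
      then show ?thesis using I True False prod_mm_two[OF False, of 2 2] by (simp add: mm_def)
    qed
  next
    case False
    have "(\<Prod>i\<in>UNIV. mm \<kappa> ((if i = j then 1 else 0) + (if i = l then 1 else 0) + (if i = k then 2 else 0))) = 0"
      by (rule prod_mm_zero[where j = j]) (use False in auto)
    then show ?thesis using I False by simp
  qed
qed

lemma Eb: "integrable s (\<lambda>u. u $ j * u $ l)"
  "integral\<^sup>L s (\<lambda>u. u $ j * u $ l) = (if j = l then 1 else 0)"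
proof -
  have e: "(\<lambda>u::real^'n. u $ j * u $ l) = (\<lambda>u. (u $ j)^1 * (u $ l)^1 * (u $ l)^0)" by simp
  show "integrable s (\<lambda>u. u $ j * u $ l)" unfolding e by (rule mono3(1)) simp
  have I: "integral\<^sup>L s (\<lambda>u. u $ j * u $ l) = (\<Prod>i\<in>UNIV. mm \<kappa> ((if i = j then 1 else 0) + (if i = l then 1 else 0) + (if i = l then 0 else 0)))"
    unfolding e by (rule mono3(2)) simp
  show "integral\<^sup>L s (\<lambda>u. u $ j * u $ l) = (if j = l then 1 else 0)"
  proof (cases "j = l")
    case True
    have "(\<Prod>i\<in>UNIV. mm \<kappa> ((if i = j then 1 else 0) + (if i = l then 1 else 0) + (if i = l then 0 else 0)))
        = (\<Prod>i\<in>UNIV. mm \<kappa> (if i = j then 2 else 0))"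
      using True by (intro prod.cong) (auto simp: eval_nat_numeral)
    then show ?thesis using I True prod_mm_single by (simp add: mm_def eval_nat_numeral)
  next
    case False
    have "(\<Prod>i\<in>UNIV. mm \<kappa> ((if i = j then 1 else 0) + (if i = l then 1 else 0) + (if i = l then 0 else 0))) = 0"
      by (rule prod_mm_zero[where j = j]) (use False in auto)
    then show ?thesis using I False by simp
  qed
qed

lemma Ec: "integrable s (\<lambda>u. u $ j * (u $ k)^2)"
  "integral\<^sup>L s (\<lambda>u. u $ j * (u $ k)^2) = 0"
proof -
  have e: "(\<lambda>u::real^'n. u $ j * (u $ k)^2) = (\<lambda>u. (u $ j)^1 * (u $ j)^0 * (u $ k)^2)" by simp
  show "integrable s (\<lambda>u. u $ j * (u $ k)^2)" unfolding e by (rule mono3(1)) simp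
  have I: "integral\<^sup>L s (\<lambda>u. u $ j * (u $ k)^2) = (\<Prod>i\<in>UNIV. mm \<kappa> ((if i = j then 1 else 0) + (if i = j then 0 else 0) + (if i = k then 2 else 0)))"
    unfolding e by (rule mono3(2)) simp
  have "(\<Prod>i\<in>UNIV. mm \<kappa> ((if i = j then 1 else 0) + (if i = j then 0 else 0) + (if i = k then 2 else 0))) = 0"
    by (rule prod_mm_zero[where j = j]) auto
  then show "integral\<^sup>L s (\<lambda>u. u $ j * (u $ k)^2) = 0" using I by simp
qed

lemma Ed: "integrable s (\<lambda>u. u $ j)" "integral\<^sup>L s (\<lambda>u. u $ j) = 0"
  using int_pow[of 1 j] mom[of 1 j] by (auto simp: mm_def)

lemma Ee: "integrable s (\<lambda>u. (u $ j)^2)" "integral\<^sup>L s (\<lambda>u. (u $ j)^2) = 1"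
  using int_pow[of 2 j] mom[of 2 j] by (auto simp: mm_def)


lemma normsq: fixes u :: "real^'m" shows "(norm u)\<^sup>2 = (\<Sum>k\<in>UNIV. (u$k)\<^sup>2)"
proof -
  have "(norm u)\<^sup>2 = inner u u" by (rule power2_norm_eq_inner)
  also have "\<dots> = (\<Sum>k\<in>UNIV. (u$k)\<^sup>2)" by (simp add: inner_vec_def power2_eq_square)
  finally show ?thesis .
qed

lemma sumsq: "(\<Sum>j\<in>UNIV. a j) * (\<Sum>l\<in>UNIV. b l) = (\<Sum>j\<in>(UNIV::'n set). \<Sum>l\<in>UNIV. (a j * b l :: real))"
  by (simp add: sum_product)

lemma pw: fixes v u :: "real^'n" and c :: real
  shows "(inner v u + c)\<^sup>2 * (1 + (norm u)\<^sup>2) =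
    (\<Sum>j\<in>UNIV. \<Sum>l\<in>UNIV. v$j * v$l * (u$j * u$l))
  + (\<Sum>j\<in>UNIV. \<Sum>k\<in>UNIV. \<Sum>l\<in>UNIV. v$j * v$l * (u$j * u$l * (u$k)\<^sup>2))
  + 2 * c * (\<Sum>j\<in>UNIV. v$j * u$j)
  + 2 * c * (\<Sum>j\<in>UNIV. \<Sum>k\<in>UNIV. v$j * (u$j * (u$k)\<^sup>2))
  + c\<^sup>2 + c\<^sup>2 * (\<Sum>k\<in>UNIV. (u$k)\<^sup>2)"
proof -
  define S where "S = (\<Sum>j\<in>UNIV. v$j * u$j)"
  define N where "N = (\<Sum>k\<in>UNIV. (u$k)\<^sup>2)"
  have hS: "inner v u = S" unfolding S_def by (simp add: inner_vec_def)
  have hN: "(norm u)\<^sup>2 = N" unfolding N_def by (rule normsq)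
  have h1: "S * S = (\<Sum>j\<in>UNIV. \<Sum>l\<in>UNIV. v$j * v$l * (u$j * u$l))"
    unfolding S_def sumsq by (intro sum.cong refl) (simp add: algebra_simps)
  have h2: "S * N = (\<Sum>j\<in>UNIV. \<Sum>k\<in>UNIV. v$j * (u$j * (u$k)\<^sup>2))"
    unfolding S_def N_def sumsq by (intro sum.cong refl) (simp add: algebra_simps)
  have h3: "S * S * N = (\<Sum>j\<in>UNIV. \<Sum>k\<in>UNIV. \<Sum>l\<in>UNIV. v$j * v$l * (u$j * u$l * (u$k)\<^sup>2))"
  proof -
    have "S * S * N = (S * N) * S" by simp
    also have "\<dots> = (\<Sum>j\<in>UNIV. \<Sum>k\<in>UNIV. v$j * (u$j * (u$k)\<^sup>2) * S)"
      unfolding h2 by (simp add: sum_distrib_right)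
    also have "\<dots> = (\<Sum>j\<in>UNIV. \<Sum>k\<in>UNIV. \<Sum>l\<in>UNIV. v$j * v$l * (u$j * u$l * (u$k)\<^sup>2))"
      unfolding S_def sum_distrib_left by (intro sum.cong refl) (simp add: algebra_simps)
    finally show ?thesis .
  qed
  have "(inner v u + c)\<^sup>2 * (1 + (norm u)\<^sup>2) = S * S + S * S * N + 2 * c * S + 2 * c * (S * N) + c\<^sup>2 + c\<^sup>2 * N"
    unfolding hS hN by (simp add: algebra_simps power2_eq_square)
  then show ?thesis by (simp only: h3[symmetric] h2[symmetric] h1[symmetric] S_def[symmetric] N_def[symmetric])
qed


lemma sum_if_card: fixes j :: 'n shows "(\<Sum>k\<in>UNIV. if j = k then \<kappa> else 1) = real CARD('n) + \<kappa> - 1"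
proof -
  have "(\<Sum>k\<in>UNIV. if j = k then \<kappa> else 1) = (\<Sum>k\<in>UNIV. 1 + (if j = k then \<kappa> - 1 else 0))"
    by (intro sum.cong) auto
  also have "\<dots> = real CARD('n) + \<kappa> - 1" by (simp add: sum.distrib)
  finally show ?thesis .
qed

lemma key: fixes v :: "real^'n" and c :: real
  shows "integrable s (\<lambda>u. (inner v u + c)\<^sup>2 * (1 + (norm u)\<^sup>2))"
    and "integral\<^sup>L s (\<lambda>u. (inner v u + c)\<^sup>2 * (1 + (norm u)\<^sup>2))
       = (real CARD('n) + 1) * c\<^sup>2 + (real CARD('n) + \<kappa>) * (norm v)\<^sup>2"
proof -
  interpret prob_space s by (rule ps)
  have fe: "(\<lambda>u. (inner v u + c)\<^sup>2 * (1 + (norm u)\<^sup>2)) = (\<lambda>u.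
    (\<Sum>j\<in>UNIV. \<Sum>l\<in>UNIV. v$j * v$l * (u$j * u$l))
  + (\<Sum>j\<in>UNIV. \<Sum>k\<in>UNIV. \<Sum>l\<in>UNIV. v$j * v$l * (u$j * u$l * (u$k)\<^sup>2))
  + 2 * c * (\<Sum>j\<in>UNIV. v$j * u$j)
  + 2 * c * (\<Sum>j\<in>UNIV. \<Sum>k\<in>UNIV. v$j * (u$j * (u$k)\<^sup>2))
  + c\<^sup>2 + c\<^sup>2 * (\<Sum>k\<in>UNIV. (u$k)\<^sup>2))"
    by (rule ext) (rule pw)
  have i1: "integrable s (\<lambda>u. \<Sum>j\<in>UNIV. \<Sum>l\<in>UNIV. v$j * v$l * (u$j * u$l))"
    by (rule Bochner_Integration.integrable_sum Bochner_Integration.integrable_mult_right Eb(1))+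
  have i2: "integrable s (\<lambda>u. \<Sum>j\<in>UNIV. \<Sum>k\<in>UNIV. \<Sum>l\<in>UNIV. v$j * v$l * (u$j * u$l * (u$k)\<^sup>2))"
    by (rule Bochner_Integration.integrable_sum Bochner_Integration.integrable_mult_right Ea(1))+
  have i3: "integrable s (\<lambda>u. 2 * c * (\<Sum>j\<in>UNIV. v$j * u$j))"
    by (rule Bochner_Integration.integrable_sum Bochner_Integration.integrable_mult_right Ed(1))+
  have i4: "integrable s (\<lambda>u. 2 * c * (\<Sum>j\<in>UNIV. \<Sum>k\<in>UNIV. v$j * (u$j * (u$k)\<^sup>2)))"
    by (rule Bochner_Integration.integrable_sum Bochner_Integration.integrable_mult_right Ec(1))+
  have i5: "integrable s (\<lambda>u. c\<^sup>2)" by simp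
  have i6: "integrable s (\<lambda>u. c\<^sup>2 * (\<Sum>k\<in>UNIV. (u$k)\<^sup>2))"
    by (rule Bochner_Integration.integrable_sum Bochner_Integration.integrable_mult_right Ee(1))+
  show "integrable s (\<lambda>u. (inner v u + c)\<^sup>2 * (1 + (norm u)\<^sup>2))"
    unfolding fe by (intro Bochner_Integration.integrable_add i1 i2 i3 i4 i5 i6)
  have v1: "integral\<^sup>L s (\<lambda>u. \<Sum>j\<in>UNIV. \<Sum>l\<in>UNIV. v$j * v$l * (u$j * u$l)) = (\<Sum>j\<in>UNIV. (v$j)\<^sup>2)"
    by (simp add: Bochner_Integration.integral_sum Eb Bochner_Integration.integrable_sum power2_eq_square if_distrib[of "\<lambda>x. _ * x"] sum.delta cong: if_cong)
  have v2: "integral\<^sup>L s (\<lambda>u. \<Sum>j\<in>UNIV. \<Sum>k\<in>UNIV. \<Sum>l\<in>UNIV. v$j * v$l * (u$j * u$l * (u$k)\<^sup>2))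
     = (real CARD('n) + \<kappa> - 1) * (\<Sum>j\<in>UNIV. (v$j)\<^sup>2)"
  proof -
    have "integral\<^sup>L s (\<lambda>u. \<Sum>j\<in>UNIV. \<Sum>k\<in>UNIV. \<Sum>l\<in>UNIV. v$j * v$l * (u$j * u$l * (u$k)\<^sup>2))
      = (\<Sum>j\<in>UNIV. \<Sum>k\<in>UNIV. \<Sum>l\<in>UNIV. v$j * v$l * (if j = l then (if j = k then \<kappa> else 1) else 0))"
      by (simp add: Bochner_Integration.integral_sum Ea Bochner_Integration.integrable_sum)
    also have "\<dots> = (\<Sum>j\<in>UNIV. \<Sum>k\<in>UNIV. (v$j)\<^sup>2 * (if j = k then \<kappa> else 1))"
      by (intro sum.cong refl) (simp add: if_distrib[of "\<lambda>x. _ * x"] sum.delta power2_eq_square cong: if_cong)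
    also have "\<dots> = (\<Sum>j\<in>UNIV. (v$j)\<^sup>2 * (real CARD('n) + \<kappa> - 1))"
      by (simp add: sum_distrib_left[symmetric] sum_if_card)
    finally show ?thesis by (simp add: sum_distrib_left mult.commute)
  qed
  have v3: "integral\<^sup>L s (\<lambda>u. 2 * c * (\<Sum>j\<in>UNIV. v$j * u$j)) = 0"
    by (simp add: Bochner_Integration.integral_sum Ed Bochner_Integration.integrable_sum)
  have v4: "integral\<^sup>L s (\<lambda>u. 2 * c * (\<Sum>j\<in>UNIV. \<Sum>k\<in>UNIV. v$j * (u$j * (u$k)\<^sup>2))) = 0"
    by (simp add: Bochner_Integration.integral_sum Ec Bochner_Integration.integrable_sum)
  have v5: "integral\<^sup>L s (\<lambda>u. c\<^sup>2) = c\<^sup>2" by (simp add: prob_space)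
  have v6: "integral\<^sup>L s (\<lambda>u. c\<^sup>2 * (\<Sum>k\<in>UNIV. (u$k)\<^sup>2)) = c\<^sup>2 * real CARD('n)"
    by (simp add: Bochner_Integration.integral_sum Ee Bochner_Integration.integrable_sum)
  have nv: "(norm v)\<^sup>2 = (\<Sum>j\<in>UNIV. (v$j)\<^sup>2)" by (rule normsq)
  show "integral\<^sup>L s (\<lambda>u. (inner v u + c)\<^sup>2 * (1 + (norm u)\<^sup>2))
       = (real CARD('n) + 1) * c\<^sup>2 + (real CARD('n) + \<kappa>) * (norm v)\<^sup>2"
    unfolding fe nv
    apply (subst Bochner_Integration.integral_add, (intro Bochner_Integration.integrable_add i1 i2 i3 i4 i5 i6)+)+
    apply (simp only: v1 v2 v3 v4 v5 v6)
    by (simp add: algebra_simps)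
qed


lemma normsq_mat: fixes C :: "real^'m^'k" shows "(norm C)\<^sup>2 = (\<Sum>i\<in>UNIV. (norm (C$i))\<^sup>2)"
proof -
  have "(norm C)\<^sup>2 = inner C C" by (rule power2_norm_eq_inner)
  also have "\<dots> = (\<Sum>i\<in>UNIV. (norm (C$i))\<^sup>2)" by (simp add: inner_vec_def power2_norm_eq_inner)
  finally show ?thesis .
qed

lemma main_int: fixes a :: "real^'n" and C :: "real^'n^'n"
  shows "integrable s (\<lambda>u. (norm (C *v u + a))\<^sup>2 * (1 + (norm u)\<^sup>2))"
    and "integral\<^sup>L s (\<lambda>u. (norm (C *v u + a))\<^sup>2 * (1 + (norm u)\<^sup>2))
       = (real CARD('n) + 1) * (norm a)\<^sup>2 + (real CARD('n) + \<kappa>) * (norm C)\<^sup>2"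
proof -
  have fe: "(\<lambda>u. (norm (C *v u + a))\<^sup>2 * (1 + (norm u)\<^sup>2))
     = (\<lambda>u. \<Sum>i\<in>UNIV. (inner (C$i) u + a$i)\<^sup>2 * (1 + (norm u)\<^sup>2))"
  proof (rule ext)
    fix u :: "real^'n"
    have "(norm (C *v u + a))\<^sup>2 = (\<Sum>i\<in>UNIV. ((C *v u + a)$i)\<^sup>2)" by (rule normsq)
    also have "\<dots> = (\<Sum>i\<in>UNIV. (inner (C$i) u + a$i)\<^sup>2)"
      by (simp add: matrix_vector_mult_def inner_vec_def)
    finally show "(norm (C *v u + a))\<^sup>2 * (1 + (norm u)\<^sup>2) = (\<Sum>i\<in>UNIV. (inner (C$i) u + a$i)\<^sup>2 * (1 + (norm u)\<^sup>2))"
      by (simp add: sum_distrib_right)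
  qed
  show "integrable s (\<lambda>u. (norm (C *v u + a))\<^sup>2 * (1 + (norm u)\<^sup>2))"
    unfolding fe by (rule Bochner_Integration.integrable_sum key(1))+
  have "integral\<^sup>L s (\<lambda>u. (norm (C *v u + a))\<^sup>2 * (1 + (norm u)\<^sup>2))
     = (\<Sum>i\<in>UNIV. (real CARD('n) + 1) * (a$i)\<^sup>2 + (real CARD('n) + \<kappa>) * (norm (C$i))\<^sup>2)"
    unfolding fe by (subst Bochner_Integration.integral_sum) (auto intro: key(1) simp: key(2))
  also have "\<dots> = (real CARD('n) + 1) * (norm a)\<^sup>2 + (real CARD('n) + \<kappa>) * (norm C)\<^sup>2"
    by (simp add: normsq[of a] normsq_mat[of C] sum.distrib sum_distrib_left)
  finally show "integral\<^sup>L s (\<lambda>u. (norm (C *v u + a))\<^sup>2 * (1 + (norm u)\<^sup>2))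
       = (real CARD('n) + 1) * (norm a)\<^sup>2 + (real CARD('n) + \<kappa>) * (norm C)\<^sup>2" .
qed

end

lemma sq_grad_comp:
  fixes f :: "real^'n \<Rightarrow> real"
  assumes "f differentiable (at (T w u))"
  shows "(norm (grad (\<lambda>w. f (T w u)) w))\<^sup>2 = (norm (grad f (T w u)))\<^sup>2 * (1 + (norm u)\<^sup>2)"
  unfolding grad_comp[OF assms] norm_Pair
  by (simp add: norm_outer algebra_simps)

lemma quad_gderiv:
  fixes zbar z :: "real^'n"
  shows "GDERIV (\<lambda>z. M / 2 * (norm (z - zbar))\<^sup>2) z :> M *\<^sub>R (z - zbar)"
proof -
  have e: "(\<lambda>z. M / 2 * (norm (z - zbar))\<^sup>2) = (\<lambda>z. M / 2 * inner (z - zbar) (z - zbar))"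
    by (simp add: power2_norm_eq_inner)
  show ?thesis unfolding e gderiv_def
    by (auto intro!: derivative_eq_intros simp: inner_commute algebra_simps inner_diff_right inner_diff_left)
qed

theorem theorem1:
  fixes s :: "(real^'n) measure" and \<kappa> :: real
  assumes "standardized_kappa s \<kappa>"
  shows "(\<forall>(f :: real^'n \<Rightarrow> real) M zbar m C.
            M \<ge> 0 \<and> (\<forall>z. f differentiable (at z)) \<and> smooth M f \<and> grad f zbar = 0 \<longrightarrow>
            (\<integral>\<^sup>+ u. ennreal ((norm (grad (\<lambda>w. f (T w u)) (m, C)))\<^sup>2) \<partial>s)
              \<le> ennreal (M\<^sup>2 * ((real CARD('n) + 1) * (norm (m - zbar))\<^sup>2
                               + (real CARD('n) + \<kappa>) * (norm C)\<^sup>2)))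
       \<and> (\<forall>M \<ge> 0. \<forall>zbar :: real^'n.
            let f = (\<lambda>z. M / 2 * (norm (z - zbar))\<^sup>2) in
            (\<forall>z. f differentiable (at z)) \<and> smooth M f \<and> grad f zbar = 0 \<and>
            (\<forall>m C. (\<integral>\<^sup>+ u. ennreal ((norm (grad (\<lambda>w. f (T w u)) (m, C)))\<^sup>2) \<partial>s)
              = ennreal (M\<^sup>2 * ((real CARD('n) + 1) * (norm (m - zbar))\<^sup>2
                               + (real CARD('n) + \<kappa>) * (norm C)\<^sup>2))))"
proof -
  note std = assms
  interpret prob_space s by (rule ps[OF std])
  define h where "h = (\<lambda>(m::real^'n) (C::real^'n^'n) zbar u. (norm (C *v u + (m - zbar)))\<^sup>2 * (1 + (norm u)\<^sup>2))"
  have hint: "integrable s (\<lambda>u. M\<^sup>2 * h m C zbar u)" for M m C zbar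
    unfolding h_def using main_int(1)[OF std] by auto
  have hval: "(\<integral>\<^sup>+ u. ennreal (M\<^sup>2 * h m C zbar u) \<partial>s) = ennreal (M\<^sup>2 * ((real CARD('n) + 1) * (norm (m - zbar))\<^sup>2
                               + (real CARD('n) + \<kappa>) * (norm C)\<^sup>2))" for M m C zbar
    by (subst nn_integral_eq_integral[OF hint]) (auto simp: h_def main_int(2)[OF std])
  have Tdiff: "T (m, C) u - zbar = C *v u + (m - zbar)" for m C u and zbar :: "real^'n"
    by (simp add: T_def)
  show ?thesis
  proof (intro conjI allI impI)
    fix f :: "real^'n \<Rightarrow> real" and M zbar m C
    assume H: "M \<ge> 0 \<and> (\<forall>z. f differentiable (at z)) \<and> smooth M f \<and> grad f zbar = 0"
    have pw: "ennreal ((norm (grad (\<lambda>w. f (T w u)) (m, C)))\<^sup>2) \<le> ennreal (M\<^sup>2 * h m C zbar u)" for u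
    proof -
      have "norm (grad f (T (m, C) u)) \<le> M * norm (T (m, C) u - zbar)"
        using H unfolding smooth_def by (metis diff_zero)
      then have "(norm (grad f (T (m, C) u)))\<^sup>2 \<le> (M * norm (T (m, C) u - zbar))\<^sup>2"
        by (simp add: power_mono)
      then have "(norm (grad f (T (m, C) u)))\<^sup>2 \<le> M\<^sup>2 * (norm (C *v u + (m - zbar)))\<^sup>2"
        unfolding Tdiff by (simp add: power_mult_distrib)
      then have "(norm (grad f (T (m, C) u)))\<^sup>2 * (1 + (norm u)\<^sup>2) \<le> (M\<^sup>2 * (norm (C *v u + (m - zbar)))\<^sup>2) * (1 + (norm u)\<^sup>2)"
        by (rule mult_right_mono) simp
      then have "(norm (grad f (T (m, C) u)))\<^sup>2 * (1 + (norm u)\<^sup>2) \<le> M\<^sup>2 * h m C zbar u"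
        unfolding h_def by (simp add: mult.assoc)
      then show ?thesis using sq_grad_comp[of f "(m, C)" u] H by (simp add: ennreal_leI)
    qed
    show "(\<integral>\<^sup>+ u. ennreal ((norm (grad (\<lambda>w. f (T w u)) (m, C)))\<^sup>2) \<partial>s)
              \<le> ennreal (M\<^sup>2 * ((real CARD('n) + 1) * (norm (m - zbar))\<^sup>2
                               + (real CARD('n) + \<kappa>) * (norm C)\<^sup>2))"
      unfolding hval[symmetric] by (rule nn_integral_mono) (rule pw)
  next
    fix M :: real and zbar :: "real^'n"
    assume M: "M \<ge> 0"
    define f where "f = (\<lambda>z. M / 2 * (norm (z - zbar))\<^sup>2)"
    have gd: "GDERIV f z :> M *\<^sub>R (z - zbar)" for z unfolding f_def by (rule quad_gderiv)
    have gr: "grad f z = M *\<^sub>R (z - zbar)" for z by (rule grad_eqI[OF gd])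
    have dif: "f differentiable (at z)" for z using gd unfolding gderiv_def differentiable_def by blast
    have sm: "smooth M f" unfolding smooth_def gr
      using M by (simp add: scaleR_diff_right[symmetric])
    have eq: "(\<integral>\<^sup>+ u. ennreal ((norm (grad (\<lambda>w. f (T w u)) (m, C)))\<^sup>2) \<partial>s)
              = ennreal (M\<^sup>2 * ((real CARD('n) + 1) * (norm (m - zbar))\<^sup>2
                               + (real CARD('n) + \<kappa>) * (norm C)\<^sup>2))" for m C
    proof -
      have "(norm (grad (\<lambda>w. f (T w u)) (m, C)))\<^sup>2 = M\<^sup>2 * h m C zbar u" for u
        unfolding sq_grad_comp[OF dif] gr h_def Tdiff[symmetric]
        using M by (simp add: power_mult_distrib)
      then show ?thesis unfolding hval[symmetric] by simp
    qed
    show "let f = (\<lambda>z. M / 2 * (norm (z - zbar))\<^sup>2) in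
            (\<forall>z. f differentiable (at z)) \<and> smooth M f \<and> grad f zbar = 0 \<and>
            (\<forall>m C. (\<integral>\<^sup>+ u. ennreal ((norm (grad (\<lambda>w. f (T w u)) (m, C)))\<^sup>2) \<partial>s)
              = ennreal (M\<^sup>2 * ((real CARD('n) + 1) * (norm (m - zbar))\<^sup>2
                               + (real CARD('n) + \<kappa>) * (norm C)\<^sup>2)))"
      unfolding Let_def f_def[symmetric] using dif sm gr eq by simp
  qed
qed

end
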